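(* The expected runtime (number of fitness evaluations) of both the (1+1)~IA$^{\text{hyp}}_{>}$ and the (1+1)~IA$^{\text{hyp}}_{\ge}$ to optimise $\textsc{OneMax}(x)=\sum_{i=1}^n x_i$ is $\Theta(n^2\log n)$.
   Context: The (1+1)~IA$^{\text{hyp}}$ keeps one bit string $x\in\{0,1\}^n$ (uniformly random initially); each iteration it creates $y$ by static hypermutation with FCM and sets $x:=y$ if $f(y)\ge f(x)$ (maximisation). Static hypermutation with FCM has a constant parameter $0<c\le1$ and mutation potential $M=cn$ (an integer): distinct bit positions are chosen uniformly at random without replacement and flipped one after another; each intermediate string is evaluated (one fitness evaluation each); the process stops at the first constructive mutation or after $M$ flips, and the last string is $y$. In (1+1)~IA$^{\text{hyp}}_{>}$ a string $z$ is constructive if $f(z)>f(x)$; in (1+1)~IA$^{\text{hyp}}_{\ge}$ if $f(z)\ge f(x)$. *)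

theory Defs
  imports "HOL-Probability.Probability"
begin

text \<open>Bit strings of length n are bool lists of length n (True = 1).\<close>

definition onemax :: "bool list \<Rightarrow> nat" where
  "onemax x = length (filter id x)"

definition flip_bits :: "nat list \<Rightarrow> bool list \<Rightarrow> bool list" where
  "flip_bits ps x = fold (\<lambda>i z. z[i := \<not> z ! i]) ps x"

definition positions :: "nat \<Rightarrow> nat \<Rightarrow> nat list set" where
  "positions n M = {ps. distinct ps \<and> length ps = M \<and> set ps \<subseteq> {0..<n}}"

text \<open>Static hypermutation with FCM.  constr a b says that a string of fitness a
  is constructive w.r.t. the parent of fitness b.  Result: (offspring y, number of
  fitness evaluations spent = number of intermediate strings evaluated).\<close>
definition hypermut ::
  "(nat \<Rightarrow> nat \<Rightarrow> bool) \<Rightarrow> (bool list \<Rightarrow> nat) \<Rightarrow> nat \<Rightarrow> bool list \<Rightarrow> (bool list \<times> nat) pmf" where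
  "hypermut constr f M x =
     map_pmf (\<lambda>ps.
        let z = (\<lambda>i. flip_bits (take i ps) x);
            found = {i \<in> {1..M}. constr (f (z i)) (f x)}
        in if found \<noteq> {} then (z (Min found), Min found) else (z M, M))
       (pmf_of_set (positions (length x) M))"

definition ia_step ::
  "(nat \<Rightarrow> nat \<Rightarrow> bool) \<Rightarrow> (bool list \<Rightarrow> nat) \<Rightarrow> nat \<Rightarrow> bool list \<Rightarrow> (bool list \<times> nat) pmf" where
  "ia_step constr f M x =
     map_pmf (\<lambda>(y, k). (if f y \<ge> f x then y else x, k)) (hypermut constr f M x)"

text \<open>State after t iterations together with the number of fitness evaluations
  used so far (1 for evaluating the uniformly random initial string); the process
  is stopped once the current string is optimal.\<close>
fun ia_run ::
  "(nat \<Rightarrow> nat \<Rightarrow> bool) \<Rightarrow> (bool list \<Rightarrow> nat) \<Rightarrow> (bool list \<Rightarrow> bool) \<Rightarrow> nat \<Rightarrow> nat \<Rightarrow> nat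
     \<Rightarrow> (bool list \<times> nat) pmf" where
  "ia_run constr f opt n M 0 =
     map_pmf (\<lambda>x. (x, 1)) (pmf_of_set {x. length x = n})"
| "ia_run constr f opt n M (Suc t) =
     bind_pmf (ia_run constr f opt n M t) (\<lambda>(x, c).
       if opt x then return_pmf (x, c)
       else map_pmf (\<lambda>(y, k). (y, c + k)) (ia_step constr f M x))"

text \<open>Expected runtime = expected number of fitness evaluations until the optimum is
  the current string (equivalently, first evaluated).  Evaluations are non-decreasing
  along the run, so by monotone convergence this supremum is E[T] (infinite if the
  optimum is not reached almost surely).\<close>
definition expected_runtime ::
  "(nat \<Rightarrow> nat \<Rightarrow> bool) \<Rightarrow> (bool list \<Rightarrow> nat) \<Rightarrow> (bool list \<Rightarrow> bool) \<Rightarrow> nat \<Rightarrow> nat \<Rightarrow> ennreal" where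
  "expected_runtime constr f opt n M =
     (SUP t. \<integral>\<^sup>+ s. ennreal (real (snd s)) \<partial>measure_pmf (ia_run constr f opt n M t))"

definition ert_IA_gt_onemax :: "nat \<Rightarrow> nat \<Rightarrow> ennreal" where
  "ert_IA_gt_onemax n M = expected_runtime (\<lambda>a b. a > b) onemax (\<lambda>x. x = replicate n True) n M"

definition ert_IA_ge_onemax :: "nat \<Rightarrow> nat \<Rightarrow> ennreal" where
  "ert_IA_ge_onemax n M = expected_runtime (\<lambda>a b. a \<ge> b) onemax (\<lambda>x. x = replicate n True) n M"

end

theory Submission
  imports Defs "HOL-Analysis.Harmonic_Numbers"
begin


definition DL :: "nat set \<Rightarrow> nat \<Rightarrow> nat list set" where
  "DL U K = {ps. distinct ps \<and> length ps = K \<and> set ps \<subseteq> U}"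

lemma finite_DL: "finite U \<Longrightarrow> finite (DL U K)"
  unfolding DL_def
  by (rule finite_subset[OF _ finite_lists_length_eq[of U K]]) auto

lemma finite_DL_filt[simp, intro]: "finite U \<Longrightarrow> finite {ps \<in> DL U K. P ps}"
  using finite_DL by auto

lemma card_DL: "finite U \<Longrightarrow> card (DL U K) = (if K \<le> card U then \<Prod>{card U - K + 1..card U} else 0)"
proof (cases "K \<le> card U")
  case True
  assume "finite U"
  then show ?thesis using True card_lists_distinct_length_eq[of U K] unfolding DL_def
    by (simp add: conj_commute conj_left_commute)
next
  case False
  assume "finite U"
  have "DL U K = {}"
  proof (rule ccontr)
    assume "DL U K \<noteq> {}"
    then obtain ps where ps: "distinct ps" "length ps = K" "set ps \<subseteq> U" unfolding DL_def by auto
    have "K = card (set ps)" using ps distinct_card by metis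
    also have "\<dots> \<le> card U" using ps \<open>finite U\<close> card_mono by metis
    finally show False using False by simp
  qed
  then show ?thesis using False by simp
qed

lemma card_DL_Suc:
  assumes "finite U" "a \<in> U"
  shows "card (DL U (Suc K)) = card U * card (DL (U - {a}) K)"
proof -
  obtain v where v: "card U = Suc v" using assms card_gt_0_iff
    by (metis card_Suc_Diff1)
  have cv: "card (U - {a}) = v" using v assms by simp
  show ?thesis
  proof (cases "Suc K \<le> card U")
    case True
    have "\<Prod>{Suc v - Suc K + 1..Suc v} = Suc v * \<Prod>{v - K + 1..v}"
      using True v by (simp add: prod.cl_ivl_Suc Suc_diff_le)
    then show ?thesis using True v cv assms by (simp add: card_DL)
  next
    case False
    then show ?thesis using v cv assms by (simp add: card_DL)
  qed
qed

lemma card_DL_Suc_filter: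
  assumes "finite U"
  shows "card {ps \<in> DL U (Suc K). P ps} = (\<Sum>a\<in>U. card {rs \<in> DL (U - {a}) K. P (a # rs)})"
proof -
  have eq: "{ps \<in> DL U (Suc K). P ps} = (\<Union>a\<in>U. (Cons a) ` {rs \<in> DL (U - {a}) K. P (a # rs)})"
    unfolding DL_def by (auto simp: length_Suc_conv) (fastforce simp: image_iff)
  have "card (\<Union>a\<in>U. (Cons a) ` {rs \<in> DL (U - {a}) K. P (a # rs)})
      = (\<Sum>a\<in>U. card ((Cons a) ` {rs \<in> DL (U - {a}) K. P (a # rs)}))"
    using assms by (intro card_UN_disjoint) (auto intro!: finite_imageI)
  also have "\<dots> = (\<Sum>a\<in>U. card {rs \<in> DL (U - {a}) K. P (a # rs)})"
    by (intro sum.cong refl card_image) auto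
  finally show ?thesis using eq by simp
qed



fun reach :: "nat set \<Rightarrow> int \<Rightarrow> nat list \<Rightarrow> bool" where
  "reach Z d [] = (d \<le> 0)"
| "reach Z d (a # ps) = (d \<le> 0 \<or> reach Z (if a \<in> Z then d - 1 else d + 1) ps)"

lemma reach_needs: "reach Z d ps \<Longrightarrow> distinct ps \<Longrightarrow> d \<le> int (card (set ps \<inter> Z))"
proof (induction ps arbitrary: d)
  case Nil
  then show ?case by simp
next
  case (Cons a ps)
  show ?case
  proof (cases "d \<le> 0")
    case True then show ?thesis by simp
  next
    case False
    then have r: "reach Z (if a \<in> Z then d - 1 else d + 1) ps" using Cons by simp
    have ih: "(if a \<in> Z then d - 1 else d + 1) \<le> int (card (set ps \<inter> Z))"
      using Cons.IH[OF r] Cons.prems by simp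
    have "card (set ps \<inter> Z) \<le> card (set (a # ps) \<inter> Z)" by (intro card_mono) auto
    moreover have "a \<in> Z \<Longrightarrow> card (set (a # ps) \<inter> Z) = Suc (card (set ps \<inter> Z))"
      using Cons.prems by (simp add: insert_absorb)
    ultimately show ?thesis using ih by (cases "a \<in> Z") auto
  qed
qed

lemma ineq_first:
  fixes z u e :: nat
  assumes "1 \<le> z" "z \<le> u"
  shows "real z * (2 * real (z - 1) / real (u - 1)) ^ e \<le> real u / 2 * (2 * real z / real u) ^ Suc e"
proof -
  have u1: "1 \<le> u" using assms by simp
  have le: "real (z - 1) / real (u - 1) \<le> real z / real u"
  proof (cases "u = 1")
    case True then show ?thesis by simp
  next
    case False
    then have "real u - 1 > 0" using u1 by simp
    moreover have "(real z - 1) * real u \<le> real z * (real u - 1)" using assms by (simp add: algebra_simps)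
    ultimately show ?thesis using u1 assms False
      by (simp add: of_nat_diff divide_simps)
  qed
  have "(2 * real (z - 1) / real (u - 1)) ^ e \<le> (2 * real z / real u) ^ e"
    using le by (intro power_mono) (auto simp: divide_simps)
  then have "real z * (2 * real (z - 1) / real (u - 1)) ^ e \<le> real z * (2 * real z / real u) ^ e"
    by (intro mult_left_mono) auto
  also have "\<dots> = real u / 2 * (2 * real z / real u) ^ Suc e" using u1 by simp
  finally show ?thesis .
qed

lemma ineq_second:
  fixes z u d :: nat
  assumes "5 * z + 2 \<le> u" "Suc d \<le> z"
  shows "real u * (2 * real z / real (u - 1)) ^ Suc d \<le> real u / 2 * (2 * real z / real u) ^ d"
proof -
  have u: "real u \<ge> 7" using assms by linarith
  have u1: "real (u - 1) = real u - 1" using assms by simp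
  define q where "q = 2 * real z / real u"
  define r where "r = 2 * real z / (real u - 1)"
  have rq: "r = q * (real u / (real u - 1))" unfolding q_def r_def using u by (simp add: divide_simps)
  have "1 + real d * (- 1 / real u) \<le> (1 + (- 1 / real u)) ^ d"
    using u by (intro Bernoulli_inequality) (auto simp: divide_simps)
  moreover have "1 + real d * (- 1 / real u) \<ge> 4 / 5"
    using assms u by (simp add: divide_simps)
  moreover have "1 + (- 1 / real u) = (real u - 1) / real u" using u by (simp add: divide_simps)
  ultimately have b: "((real u - 1) / real u) ^ d \<ge> 4 / 5" by simp
  have "(real u / (real u - 1)) ^ d = 1 / ((real u - 1) / real u) ^ d"
    by (simp add: power_divide)
  also have "\<dots> \<le> 5 / 4"
  proof -
    have gen: "1 / t \<le> 5 / 4" if "t \<ge> 4 / 5" for t :: real using that by (simp add: divide_simps)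
    show ?thesis by (rule gen[OF b])
  qed
  finally have b2: "(real u / (real u - 1)) ^ d \<le> 5 / 4" .
  have rb: "r \<le> 2 / 5" unfolding r_def using assms u by (simp add: divide_simps)
  have r0: "r \<ge> 0" unfolding r_def using u by simp
  have q0: "q \<ge> 0" unfolding q_def using u by simp
  have "r ^ Suc d = r * (q ^ d * (real u / (real u - 1)) ^ d)"
    unfolding rq power_Suc power_mult_distrib by simp
  also have "\<dots> \<le> (2 / 5) * (q ^ d * (5 / 4))"
  proof -
    have p0: "(real u / (real u - 1)) ^ d \<ge> 0" using u by simp
    show ?thesis using rb b2 r0 q0 p0 by (intro mult_mono) auto
  qed
  also have "\<dots> = q ^ d / 2" by simp
  finally have "r ^ Suc d \<le> q ^ d / 2" .
  then have "real u * r ^ Suc d \<le> real u * (q ^ d / 2)" using u by (intro mult_left_mono) auto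
  then show ?thesis unfolding q_def r_def u1 by simp
qed

lemma reach_nonpos: "d \<le> 0 \<Longrightarrow> reach Z d ps"
  by (cases ps) auto

lemma reach_empty:
  assumes "finite U" "card (U \<inter> Z) < d"
  shows "{ps \<in> DL U K. reach Z (int d) ps} = {}"
proof -
  { fix ps assume ps: "ps \<in> DL U K" "reach Z (int d) ps"
    have "int d \<le> int (card (set ps \<inter> Z))" using reach_needs[OF ps(2)] ps(1) by (auto simp: DL_def)
    moreover have "card (set ps \<inter> Z) \<le> card (U \<inter> Z)" using ps(1) assms(1)
      by (intro card_mono) (auto simp: DL_def)
    ultimately have False using assms by simp }
  then show ?thesis by auto
qed



lemma term_in:
  assumes IH: "\<And>U d. finite U \<Longrightarrow> 7 * int (card (U \<inter> Z)) \<le> int (card U) + 2 * int d \<Longrightarrow>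
      real (card {ps \<in> DL U K. reach Z (int d) ps})
           \<le> (2 * real (card (U \<inter> Z)) / real (card U)) ^ d * real (card (DL U K))"
  and fin: "finite U" and cond: "7 * int (card (U \<inter> Z)) \<le> int (card U) + 2 * int (Suc e)"
  and a: "a \<in> U" "a \<in> Z"
  shows "real (card {rs \<in> DL (U - {a}) K. reach Z (int (Suc e)) (a # rs)})
     \<le> (2 * (real (card (U \<inter> Z)) - 1) / real (card U - 1)) ^ e * real (card (DL (U - {a}) K))"
proof -
  have r: "reach Z (int (Suc e)) (a # rs) = reach Z (int e) rs" for rs
    using a by simp
  have i1: "(U - {a}) \<inter> Z = (U \<inter> Z) - {a}" by auto
  have ai: "a \<in> U \<inter> Z" using a by simp
  have c1: "card ((U - {a}) \<inter> Z) = card (U \<inter> Z) - 1"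
    unfolding i1 using fin ai by (simp add: card_Diff_singleton)
  have c2: "card (U - {a}) = card U - 1" using fin a by (simp add: card_Diff_singleton)
  have pz: "card (U \<inter> Z) \<ge> 1" using fin ai by (metis One_nat_def Suc_leI card_gt_0_iff empty_iff finite_Int)
  have pu: "card U \<ge> 1" using fin a by (metis One_nat_def Suc_leI card_gt_0_iff empty_iff)
  have cond': "7 * int (card ((U - {a}) \<inter> Z)) \<le> int (card (U - {a})) + 2 * int e"
    unfolding c1 c2 using cond pz pu by (simp add: of_nat_diff)
  have "real (card {rs \<in> DL (U - {a}) K. reach Z (int e) rs})
      \<le> (2 * real (card ((U - {a}) \<inter> Z)) / real (card (U - {a}))) ^ e * real (card (DL (U - {a}) K))"
    using IH[OF _ cond'] fin by simp
  then show ?thesis unfolding r c1 c2 using pz pu by (simp add: of_nat_diff)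
qed

lemma term_out:
  assumes IH: "\<And>U d. finite U \<Longrightarrow> 7 * int (card (U \<inter> Z)) \<le> int (card U) + 2 * int d \<Longrightarrow>
      real (card {ps \<in> DL U K. reach Z (int d) ps})
           \<le> (2 * real (card (U \<inter> Z)) / real (card U)) ^ d * real (card (DL U K))"
  and fin: "finite U" and cond: "7 * int (card (U \<inter> Z)) \<le> int (card U) + 2 * int (Suc e)"
  and a: "a \<in> U" "a \<notin> Z"
  shows "real (card {rs \<in> DL (U - {a}) K. reach Z (int (Suc e)) (a # rs)})
     \<le> (if Suc (Suc e) \<le> card (U \<inter> Z) then (2 * real (card (U \<inter> Z)) / real (card U - 1)) ^ Suc (Suc e) else 0)
        * real (card (DL (U - {a}) K))"
proof -
  have r: "reach Z (int (Suc e)) (a # rs) = reach Z (int (Suc (Suc e))) rs" for rs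
    using a by (simp add: add.commute)
  have i1: "(U - {a}) \<inter> Z = (U \<inter> Z)" using a by auto
  have c2: "card (U - {a}) = card U - 1" using fin a by (simp add: card_Diff_singleton)
  have pu: "card U \<ge> 1" using fin a by (metis One_nat_def Suc_leI card_gt_0_iff empty_iff)
  show ?thesis
  proof (cases "Suc (Suc e) \<le> card (U \<inter> Z)")
    case True
    have cond': "7 * int (card ((U - {a}) \<inter> Z)) \<le> int (card (U - {a})) + 2 * int (Suc (Suc e))"
      unfolding i1 c2 using cond pu by (simp add: of_nat_diff)
    have "real (card {rs \<in> DL (U - {a}) K. reach Z (int (Suc (Suc e))) rs})
        \<le> (2 * real (card ((U - {a}) \<inter> Z)) / real (card (U - {a}))) ^ Suc (Suc e) * real (card (DL (U - {a}) K))"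
      using IH[OF _ cond'] fin by simp
    then show ?thesis unfolding r i1 c2 using True by simp
  next
    case False
    have E: "{rs \<in> DL (U - {a}) K. reach Z (int (Suc (Suc e))) rs} = {}"
      using reach_empty[of "U - {a}" Z "Suc (Suc e)" K] fin False i1 by simp
    show ?thesis unfolding r E using False by simp
  qed
qed

lemma reach_count_step:
  assumes IH: "\<And>U d. finite U \<Longrightarrow> 7 * int (card (U \<inter> Z)) \<le> int (card U) + 2 * int d \<Longrightarrow>
      real (card {ps \<in> DL U K. reach Z (int d) ps})
           \<le> (2 * real (card (U \<inter> Z)) / real (card U)) ^ d * real (card (DL U K))"
  and fin: "finite U" and cond: "7 * int (card (U \<inter> Z)) \<le> int (card U) + 2 * int (Suc e)"
  and ne: "U \<noteq> {}"
  shows "real (card {ps \<in> DL U (Suc K). reach Z (int (Suc e)) ps})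
           \<le> (2 * real (card (U \<inter> Z)) / real (card U)) ^ Suc e * real (card (DL U (Suc K)))"
proof -
  define u where "u = card U"
  define z where "z = card (U \<inter> Z)"
  define D where "D = real (card (DL U (Suc K)))"
  have u1: "1 \<le> u" using ne fin unfolding u_def by (simp add: Suc_leI card_gt_0_iff)
  have zu: "z \<le> u" unfolding z_def u_def using fin by (intro card_mono) auto
  have Dk: "real (card (DL (U - {a}) K)) = D / real u" if "a \<in> U" for a
  proof -
    have "card (DL U (Suc K)) = card U * card (DL (U - {a}) K)" by (rule card_DL_Suc[OF fin that])
    then show ?thesis unfolding D_def u_def using u1 u_def by simp
  qed
  define T1 where "T1 = (2 * (real z - 1) / real (u - 1)) ^ e * (D / real u)"
  define T2 where "T2 = (if Suc (Suc e) \<le> z then (2 * real z / real (u - 1)) ^ Suc (Suc e) else 0) * (D / real u)"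
  have tb: "real (card {rs \<in> DL (U - {a}) K. reach Z (int (Suc e)) (a # rs)})
          \<le> (if a \<in> Z then T1 else T2)" if a: "a \<in> U" for a
  proof (cases "a \<in> Z")
    case True
    show ?thesis using term_in[OF IH fin cond a True] True Dk[OF a] unfolding T1_def z_def u_def by simp
  next
    case False
    show ?thesis using term_out[OF IH fin cond a False] False Dk[OF a] unfolding T2_def z_def u_def by simp
  qed
  have "real (card {ps \<in> DL U (Suc K). reach Z (int (Suc e)) ps})
      = (\<Sum>a\<in>U. real (card {rs \<in> DL (U - {a}) K. reach Z (int (Suc e)) (a # rs)}))"
    unfolding card_DL_Suc_filter[OF fin] of_nat_sum ..
  also have "\<dots> \<le> (\<Sum>a\<in>U. (if a \<in> Z then T1 else T2))"
    using tb by (intro sum_mono) auto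
  also have "\<dots> = real z * T1 + real (u - z) * T2"
  proof -
    have "(\<Sum>a\<in>U. (if a \<in> Z then T1 else T2)) = (\<Sum>a\<in>U \<inter> Z. T1) + (\<Sum>a\<in>U - Z. T2)"
      using fin by (simp add: sum.If_cases Diff_eq)
    moreover have "card (U - Z) = u - z" unfolding u_def z_def using fin
      by (simp add: card_Diff_subset_Int)
    ultimately show ?thesis unfolding z_def by simp
  qed
  also have "\<dots> \<le> (2 * real z / real u) ^ Suc e * D"
  proof -
    have D0: "D \<ge> 0" unfolding D_def by simp
    have a1: "real z * (2 * (real z - 1) / real (u - 1)) ^ e \<le> real u / 2 * (2 * real z / real u) ^ Suc e"
    proof (cases "z = 0")
      case True then show ?thesis by simp
    next
      case False
      then have "real (z - 1) = real z - 1" by simp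
      then show ?thesis using ineq_first[of z u e] zu False by simp
    qed
    have a2: "real (u - z) * (if Suc (Suc e) \<le> z then (2 * real z / real (u - 1)) ^ Suc (Suc e) else 0)
          \<le> real u / 2 * (2 * real z / real u) ^ Suc e"
    proof (cases "Suc (Suc e) \<le> z")
      case True
      have "5 * z + 2 \<le> u" using cond True unfolding u_def z_def by presburger
      then have "real u * (2 * real z / real (u - 1)) ^ Suc (Suc e) \<le> real u / 2 * (2 * real z / real u) ^ Suc e"
        using ineq_second True by blast
      moreover have "real (u - z) * (2 * real z / real (u - 1)) ^ Suc (Suc e) \<le> real u * (2 * real z / real (u - 1)) ^ Suc (Suc e)"
        using zu by (intro mult_right_mono) auto
      ultimately show ?thesis using True by simp
    next
      case False then show ?thesis by simp
    qed
    have "real z * T1 + real (u - z) * T2 =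
       (real z * (2 * (real z - 1) / real (u - 1)) ^ e
         + real (u - z) * (if Suc (Suc e) \<le> z then (2 * real z / real (u - 1)) ^ Suc (Suc e) else 0)) * (D / real u)"
      unfolding T1_def T2_def by (simp add: algebra_simps)
    also have "\<dots> \<le> (real u / 2 * (2 * real z / real u) ^ Suc e + real u / 2 * (2 * real z / real u) ^ Suc e) * (D / real u)"
      using a1 a2 D0 u1 by (intro mult_right_mono add_mono) auto
    also have "\<dots> = (2 * real z / real u) ^ Suc e * D" using u1 by simp
    finally show ?thesis .
  qed
  finally show ?thesis unfolding D_def u_def z_def .
qed

lemma reach_count:
  assumes "finite U" "7 * int (card (U \<inter> Z)) \<le> int (card U) + 2 * int d"
  shows "real (card {ps \<in> DL U K. reach Z (int d) ps})
           \<le> (2 * real (card (U \<inter> Z)) / real (card U)) ^ d * real (card (DL U K))"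
  using assms
proof (induction K arbitrary: U d)
  case 0
  have D0: "DL U 0 = {[]}" by (auto simp: DL_def)
  have "{ps \<in> DL U 0. reach Z (int d) ps} = (if d = 0 then {[]} else {})" unfolding D0 by auto
  then show ?case using D0 by simp
next
  case (Suc K)
  show ?case
  proof (cases "d = 0")
    case True
    then have "{ps \<in> DL U (Suc K). reach Z (int d) ps} = DL U (Suc K)"
      using reach_nonpos by auto
    then show ?thesis using True by simp
  next
    case False
    then obtain e where dSuc: "d = Suc e" using not0_implies_Suc by blast
    show ?thesis
    proof (cases "U = {}")
      case True
      then have "DL U (Suc K) = {}" by (auto simp: DL_def)
      then show ?thesis by simp
    next
      case False
      show ?thesis unfolding dSuc
        by (rule reach_count_step[OF Suc.IH Suc.prems(1) _ False]) (use Suc.prems(2) dSuc in auto)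
    qed
  qed
qed

lemma hd_count:
  assumes fin: "finite U" and ZU: "Z \<subseteq> U" and ne: "U \<noteq> {}"
  shows "real (card {ps \<in> DL U (Suc K). hd ps \<in> Z}) = real (card Z) / real (card U) * real (card (DL U (Suc K)))"
proof -
  define D where "D = real (card (DL U (Suc K)))"
  have u1: "card U \<ge> 1" using ne fin by (simp add: Suc_leI card_gt_0_iff)
  have Dk: "real (card (DL (U - {a}) K)) = D / real (card U)" if "a \<in> U" for a
  proof -
    have "card (DL U (Suc K)) = card U * card (DL (U - {a}) K)" by (rule card_DL_Suc[OF fin that])
    then show ?thesis unfolding D_def using u1 by simp
  qed
  have "real (card {ps \<in> DL U (Suc K). hd ps \<in> Z})
      = (\<Sum>a\<in>U. real (card {rs \<in> DL (U - {a}) K. hd (a # rs) \<in> Z}))"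
    unfolding card_DL_Suc_filter[OF fin] of_nat_sum ..
  also have "\<dots> = (\<Sum>a\<in>U. if a \<in> Z then D / real (card U) else 0)"
    using Dk by (intro sum.cong) auto
  also have "\<dots> = real (card Z) * (D / real (card U))"
    using fin ZU by (simp add: sum.If_cases Int_absorb1)
  finally show ?thesis unfolding D_def by simp
qed

lemma E_count:
  assumes fin: "finite U" and ZU: "Z \<subseteq> U" and n3: "card U \<ge> 3" and j7: "7 * card Z \<le> card U + 1"
  shows "real (card {ps \<in> DL U (Suc K). hd ps \<in> Z \<or> reach Z 1 (tl ps)})
           \<le> 4 * real (card Z) / real (card U) * real (card (DL U (Suc K)))"
proof -
  define D where "D = real (card (DL U (Suc K)))"
  define n where "n = card U"
  define j where "j = card Z"
  have u1: "n \<ge> 3" using n3 n_def by simp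
  have Dk: "real (card (DL (U - {a}) K)) = D / real n" if "a \<in> U" for a
  proof -
    have "card (DL U (Suc K)) = card U * card (DL (U - {a}) K)" by (rule card_DL_Suc[OF fin that])
    then show ?thesis unfolding D_def n_def using u1 n_def by simp
  qed
  have D0: "D \<ge> 0" unfolding D_def by simp
  have tb: "real (card {rs \<in> DL (U - {a}) K. hd (a # rs) \<in> Z \<or> reach Z 1 (tl (a # rs))})
       \<le> (if a \<in> Z then D / real n else 2 * real j / real (n - 1) * (D / real n))" if a: "a \<in> U" for a
  proof (cases "a \<in> Z")
    case True
    have "card {rs \<in> DL (U - {a}) K. hd (a # rs) \<in> Z \<or> reach Z 1 (tl (a # rs))} \<le> card (DL (U - {a}) K)"
      using fin by (intro card_mono) (auto intro: finite_DL)
    then show ?thesis using True Dk[OF a] by simp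
  next
    case False
    have i1: "(U - {a}) \<inter> Z = Z" using False ZU by auto
    have c2: "card (U - {a}) = n - 1" using fin a n_def by (simp add: card_Diff_singleton)
    have cond: "7 * int (card ((U - {a}) \<inter> Z)) \<le> int (card (U - {a})) + 2 * int 1"
      unfolding i1 c2 using j7 u1 unfolding n_def by (simp add: of_nat_diff)
    have "real (card {rs \<in> DL (U - {a}) K. reach Z (int 1) rs})
      \<le> (2 * real (card ((U - {a}) \<inter> Z)) / real (card (U - {a}))) ^ 1 * real (card (DL (U - {a}) K))"
      by (rule reach_count[OF _ cond]) (use fin in auto)
    then show ?thesis using False Dk[OF a] unfolding i1 c2 j_def by simp
  qed
  have "real (card {ps \<in> DL U (Suc K). hd ps \<in> Z \<or> reach Z 1 (tl ps)})
      = (\<Sum>a\<in>U. real (card {rs \<in> DL (U - {a}) K. hd (a # rs) \<in> Z \<or> reach Z 1 (tl (a # rs))}))"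
    unfolding card_DL_Suc_filter[OF fin] of_nat_sum ..
  also have "\<dots> \<le> (\<Sum>a\<in>U. (if a \<in> Z then D / real n else 2 * real j / real (n - 1) * (D / real n)))"
    using tb by (intro sum_mono) auto
  also have "\<dots> = real j * (D / real n) + real (n - j) * (2 * real j / real (n - 1) * (D / real n))"
  proof -
    have "card (U - Z) = n - j" unfolding n_def j_def using fin ZU by (simp add: card_Diff_subset finite_subset)
    then show ?thesis using fin ZU unfolding j_def by (simp add: sum.If_cases Int_absorb1 Diff_eq[symmetric])
  qed
  also have "\<dots> \<le> 4 * real j / real n * D"
  proof -
    have jn: "j \<le> n" unfolding j_def n_def using fin ZU card_mono by blast
    have "real (n - j) * (2 * real j / real (n - 1)) \<le> real n * (2 * real j / real (n - 1))"
      by (intro mult_right_mono) auto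
    also have "\<dots> \<le> 3 * real j"
      using u1 by (simp add: divide_simps of_nat_diff) (simp add: algebra_simps mult_left_mono)
    finally have h: "real (n - j) * (2 * real j / real (n - 1)) \<le> 3 * real j" .
    have "real j * (D / real n) + real (n - j) * (2 * real j / real (n - 1) * (D / real n))
        = (real j + real (n - j) * (2 * real j / real (n - 1))) * (D / real n)"
      by (simp add: algebra_simps)
    also have "\<dots> \<le> (real j + 3 * real j) * (D / real n)"
      using h D0 u1 by (intro mult_right_mono) auto
    also have "\<dots> = 4 * real j / real n * D" by simp
    finally show ?thesis .
  qed
  finally show ?thesis unfolding D_def n_def j_def .
qed



definition sc :: "bool list \<Rightarrow> nat list \<Rightarrow> int" where
  "sc x ps = sum_list (map (\<lambda>p. if x ! p then -1 else 1) ps)"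

lemma sc_Nil[simp]: "sc x [] = 0" by (simp add: sc_def)
lemma sc_Cons[simp]: "sc x (a # ps) = (if x ! a then -1 else 1) + sc x ps" by (simp add: sc_def)
lemma sc_snoc: "sc x (ps @ [a]) = sc x ps + (if x ! a then -1 else 1)" by (simp add: sc_def)

lemma length_flip_bits[simp]: "length (flip_bits ps x) = length x"
  by (induction ps arbitrary: x) (auto simp: flip_bits_def)

lemma flip_bits_Cons: "flip_bits (a # ps) x = flip_bits ps (x[a := \<not> x ! a])"
  by (simp add: flip_bits_def)

lemma flip_bits_snoc: "flip_bits (ps @ [a]) x = (flip_bits ps x)[a := \<not> (flip_bits ps x) ! a]"
  by (simp add: flip_bits_def)

lemma flip_bits_Nil[simp]: "flip_bits [] x = x"
  by (simp add: flip_bits_def)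

lemma onemax_upd:
  assumes "i < length z"
  shows "int (onemax (z[i := \<not> z ! i])) = int (onemax z) + (if z ! i then -1 else 1)"
proof -
  have z: "z = take i z @ [z ! i] @ drop (Suc i) z" using assms
    by (simp add: Cons_nth_drop_Suc)
  have u: "z[i := \<not> z ! i] = take i z @ [\<not> z ! i] @ drop (Suc i) z"
    using assms by (simp add: upd_conv_take_nth_drop)
  have "onemax z = length (filter id (take i z)) + (if z ! i then 1 else 0) + length (filter id (drop (Suc i) z))"
    unfolding onemax_def by (subst z) simp
  moreover have "onemax (z[i := \<not> z ! i]) = length (filter id (take i z)) + (if z ! i then 0 else 1) + length (filter id (drop (Suc i) z))"
    unfolding onemax_def u by simp
  ultimately show ?thesis by auto
qed

lemma onemax_flip:
  assumes "distinct ps" "set ps \<subseteq> {..<length x}"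
  shows "int (onemax (flip_bits ps x)) = int (onemax x) + sc x ps"
  using assms
proof (induction ps arbitrary: x)
  case Nil
  then show ?case by simp
next
  case (Cons a ps)
  have a: "a < length x" using Cons.prems by auto
  have eq: "sc (x[a := \<not> x ! a]) ps = sc x ps"
  proof -
    have "map (\<lambda>p. if x[a := \<not> x ! a] ! p then -1 else 1) ps = map (\<lambda>p. if x ! p then -1 else (1::int)) ps"
    proof (intro map_cong refl)
      fix p assume p: "p \<in> set ps"
      then have "p \<noteq> a" using Cons.prems by auto
      then show "(if x[a := \<not> x ! a] ! p then -1 else 1) = (if x ! p then -1 else (1::int))" by simp
    qed
    then show ?thesis unfolding sc_def by (rule arg_cong)
  qed
  have "int (onemax (flip_bits (a # ps) x)) = int (onemax (x[a := \<not> x ! a])) + sc (x[a := \<not> x ! a]) ps"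
    unfolding flip_bits_Cons using Cons.prems by (intro Cons.IH) auto
  also have "\<dots> = int (onemax x) + sc x (a # ps)"
    using onemax_upd[OF a] eq by simp
  finally show ?case .
qed

lemma onemax_flip_step:
  assumes "i < length ps" "set ps \<subseteq> {..<length x}"
  shows "onemax (flip_bits (take (Suc i) ps) x) \<le> onemax (flip_bits (take i ps) x) + 1"
proof -
  have t: "take (Suc i) ps = take i ps @ [ps ! i]" using assms by (simp add: take_Suc_conv_app_nth)
  have l: "ps ! i < length (flip_bits (take i ps) x)" using assms nth_mem by fastforce
  show ?thesis unfolding t flip_bits_snoc using onemax_upd[OF l] by (simp split: if_splits)
qed

lemma sc_reach:
  assumes "r \<le> length ps" "d \<le> sc x (take r ps)" "set ps \<subseteq> {..<length x}"
  shows "reach {p. p < length x \<and> \<not> x ! p} d ps"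
  using assms
proof (induction ps arbitrary: d r)
  case Nil
  then show ?case by simp
next
  case (Cons a ps)
  show ?case
  proof (cases r)
    case 0
    then show ?thesis using Cons.prems by (simp add: reach_nonpos)
  next
    case (Suc r')
    have al: "a < length x" using Cons.prems by auto
    have "reach {p. p < length x \<and> \<not> x ! p} (if a \<in> {p. p < length x \<and> \<not> x ! p} then d - 1 else d + 1) ps"
      apply (rule Cons.IH[of r'])
      using Cons.prems Suc al by auto
    then show ?thesis by simp
  qed
qed



definition hmres :: "(nat \<Rightarrow> nat \<Rightarrow> bool) \<Rightarrow> nat \<Rightarrow> bool list \<Rightarrow> nat list \<Rightarrow> bool list \<times> nat" where
  "hmres constr M x ps =
        (let z = (\<lambda>i. flip_bits (take i ps) x);
            found = {i \<in> {1..M}. constr (onemax (z i)) (onemax x)}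
        in if found \<noteq> {} then (z (Min found), Min found) else (z M, M))"

definition stepres :: "(nat \<Rightarrow> nat \<Rightarrow> bool) \<Rightarrow> nat \<Rightarrow> bool list \<Rightarrow> nat list \<Rightarrow> bool list \<times> nat" where
  "stepres constr M x ps = (\<lambda>(y, k). (if onemax y \<ge> onemax x then y else x, k)) (hmres constr M x ps)"

lemma ia_step_eq:
  "ia_step constr onemax M x = map_pmf (stepres constr M x) (pmf_of_set (positions (length x) M))"
  unfolding ia_step_def hypermut_def stepres_def hmres_def
  by (simp add: map_pmf_comp)

lemma positions_DL: "positions n M = DL {0..<n} M"
  unfolding positions_def DL_def by simp

definition good_constr :: "(nat \<Rightarrow> nat \<Rightarrow> bool) \<Rightarrow> bool" where
  "good_constr constr \<longleftrightarrow> (\<forall>b. constr (Suc b) b) \<and> (\<forall>a b. a < b \<longrightarrow> \<not> constr a b)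
      \<and> (\<forall>a b. \<not> constr a b \<longrightarrow> a \<le> b)"

lemma good_gt: "good_constr (\<lambda>a b. a > b)" by (auto simp: good_constr_def)
lemma good_ge: "good_constr (\<lambda>a b. a \<ge> b)" by (auto simp: good_constr_def)

locale stepctx =
  fixes constr :: "nat \<Rightarrow> nat \<Rightarrow> bool" and M :: nat and x :: "bool list" and ps :: "nat list"
  assumes gc: "good_constr constr"
    and ps: "ps \<in> DL {0..<length x} M"
    and M1: "1 \<le> M"
begin

abbreviation "z i \<equiv> flip_bits (take i ps) x"
definition "found = {i \<in> {1..M}. constr (onemax (z i)) (onemax x)}"

lemma lenps: "length ps = M" using ps by (simp add: DL_def)
lemma distps: "distinct ps" using ps by (simp add: DL_def)
lemma setps: "set ps \<subseteq> {..<length x}" using ps by (auto simp: DL_def)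

lemma hm_eq: "hmres constr M x ps = (if found \<noteq> {} then (z (Min found), Min found) else (z M, M))"
  unfolding hmres_def found_def Let_def by simp

lemma onemax_z: "int (onemax (z r)) = int (onemax x) + sc x (take r ps)"
proof -
  have "distinct (take r ps)" using distps by simp
  moreover have "set (take r ps) \<subseteq> {..<length x}" using setps by (meson order_trans set_take_subset)
  ultimately show ?thesis by (rule onemax_flip)
qed

lemma found_sub: "found \<subseteq> {1..M}" unfolding found_def by auto
lemma found_fin: "finite found" using found_sub by (rule finite_subset) simp

lemma k_bounds: "1 \<le> snd (stepres constr M x ps) \<and> snd (stepres constr M x ps) \<le> M"
proof -
  have "found \<noteq> {} \<Longrightarrow> Min found \<in> {1..M}" by (meson Min_in found_fin found_sub subsetD)
  then show ?thesis using M1 unfolding stepres_def hm_eq by (auto split: prod.splits)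
qed

lemma len_res: "length (fst (stepres constr M x ps)) = length x"
  unfolding stepres_def hm_eq by (auto split: prod.splits)

lemma not_found_le: "i \<in> {1..M} \<Longrightarrow> i \<notin> found \<Longrightarrow> onemax (z i) \<le> onemax x"
  using gc unfolding found_def good_constr_def by auto

lemma hm_upper: "onemax (fst (hmres constr M x ps)) \<le> onemax x + 1"
proof (cases "found = {}")
  case True
  have "M \<in> {1..M}" using M1 by simp
  then have "onemax (z M) \<le> onemax x" using not_found_le True by blast
  then show ?thesis unfolding hm_eq using True by simp
next
  case False
  define m where "m = Min found"
  have mf: "m \<in> found" using False found_fin m_def by simp
  then have m1: "1 \<le> m" "m \<le> M" using found_sub by auto
  have prev: "onemax (z (m - 1)) \<le> onemax x"
  proof (cases "m = 1")
    case True then show ?thesis by simp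
  next
    case False
    have "m - 1 \<notin> found"
    proof
      assume "m - 1 \<in> found"
      then have "m \<le> m - 1" using Min_le[OF found_fin] m_def by blast
      then show False using m1 by simp
    qed
    moreover have "m - 1 \<in> {1..M}" using m1 False by auto
    ultimately show ?thesis using not_found_le by blast
  qed
  have "onemax (z (Suc (m - 1))) \<le> onemax (z (m - 1)) + 1"
    using onemax_flip_step[of "m - 1" ps x] m1 lenps setps by simp
  then have "onemax (z m) \<le> onemax x + 1" using prev m1 by simp
  then show ?thesis unfolding hm_eq m_def[symmetric] using False by simp
qed

lemma res_bounds: "onemax x \<le> onemax (fst (stepres constr M x ps)) \<and> onemax (fst (stepres constr M x ps)) \<le> onemax x + 1"
  using hm_upper unfolding stepres_def by (auto split: prod.splits)

lemma res_hd_zero: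
  assumes "\<not> x ! (hd ps)"
  shows "onemax (fst (stepres constr M x ps)) = onemax x + 1"
proof -
  obtain a rest where pa: "ps = a # rest" using lenps M1 by (cases ps) auto
  have "int (onemax (z 1)) = int (onemax x) + 1" using onemax_z[of 1] assms pa by simp
  then have o1: "onemax (z 1) = Suc (onemax x)" by simp
  then have "1 \<in> found" unfolding found_def using gc M1 by (auto simp: good_constr_def)
  moreover have "\<forall>i\<in>found. 1 \<le> i" using found_sub by auto
  moreover have "Min found \<in> found" using found_fin \<open>1 \<in> found\<close> by (intro Min_in) auto
  ultimately have "Min found = 1" using found_fin
    by (intro antisym) auto
  then have "hmres constr M x ps = (z 1, 1)" unfolding hm_eq using \<open>1 \<in> found\<close> by auto
  then show ?thesis unfolding stepres_def using o1 by simp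
qed

lemma res_noE:
  assumes "\<not> (hd ps \<in> {p. p < length x \<and> \<not> x ! p} \<or> reach {p. p < length x \<and> \<not> x ! p} 1 (tl ps))"
  shows "snd (stepres constr M x ps) = M \<and> fst (stepres constr M x ps) = x"
proof -
  let ?Z = "{p. p < length x \<and> \<not> x ! p}"
  obtain a rest where pa: "ps = a # rest" using lenps M1 by (cases ps) auto
  have al: "a < length x" using setps pa by auto
  have lt: "onemax (z r) < onemax x" if r: "r \<in> {1..M}" for r
  proof (rule ccontr)
    assume "\<not> onemax (z r) < onemax x"
    then have "0 \<le> sc x (take r ps)" using onemax_z[of r] by linarith
    moreover obtain r' where r': "r = Suc r'" using r by (cases r) auto
    ultimately have h: "0 \<le> (if x ! a then -1 else 1) + sc x (take r' rest)" using pa by simp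
    show False
    proof (cases "x ! a")
      case False
      then show False using assms pa al by simp
    next
      case True
      then have "1 \<le> sc x (take r' rest)" using h by simp
      moreover have "r' \<le> length rest" using r r' lenps pa by simp
      moreover have "set rest \<subseteq> {..<length x}" using setps pa by auto
      ultimately have "reach ?Z 1 rest" using sc_reach by blast
      then show False using assms pa by simp
    qed
  qed
  have "found = {}"
  proof -
    { fix i assume "i \<in> found"
      then have "i \<in> {1..M}" "constr (onemax (z i)) (onemax x)" unfolding found_def by auto
      then have False using lt gc unfolding good_constr_def by blast }
    then show ?thesis by auto
  qed
  moreover have "onemax (z M) < onemax x" using lt M1 by simp
  ultimately show ?thesis unfolding stepres_def hm_eq by simp
qed

end



lemma nn_int_pmf_of_set_real:
  assumes "finite S" "S \<noteq> {}" "\<And>s. s \<in> S \<Longrightarrow> 0 \<le> f s"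
  shows "(\<integral>\<^sup>+s. ennreal (f s) \<partial>measure_pmf (pmf_of_set S)) = ennreal ((\<Sum>s\<in>S. f s) / real (card S))"
proof -
  have c: "real (card S) > 0" using assms by (simp add: card_gt_0_iff)
  have "(\<integral>\<^sup>+s. ennreal (f s) \<partial>measure_pmf (pmf_of_set S)) = (\<Sum>s\<in>S. ennreal (f s)) / of_nat (card S)"
    by (rule nn_integral_pmf_of_set[OF assms(2,1)])
  also have "\<dots> = ennreal (\<Sum>s\<in>S. f s) / ennreal (real (card S))"
    using assms(3) by (simp add: ennreal_of_nat_eq_real_of_nat)
  also have "\<dots> = ennreal ((\<Sum>s\<in>S. f s) / real (card S))"
    using c assms(3) by (intro divide_ennreal) (auto intro: sum_nonneg)
  finally show ?thesis .
qed

definition zset :: "bool list \<Rightarrow> nat set" where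
  "zset x = {p. p < length x \<and> \<not> x ! p}"

lemma onemax_card: "onemax x = card {p. p < length x \<and> x ! p}"
  unfolding onemax_def by (simp add: length_filter_conv_card)

lemma card_zset: "card (zset x) = length x - onemax x"
proof -
  have "{0..<length x} = zset x \<union> {p. p < length x \<and> x ! p}" "zset x \<inter> {p. p < length x \<and> x ! p} = {}"
    unfolding zset_def by auto
  then have "length x = card (zset x) + card {p. p < length x \<and> x ! p}"
    by (metis card_Un_disjoint card_atLeastLessThan diff_zero finite_Un finite_atLeastLessThan)
  then show ?thesis unfolding onemax_card by simp
qed

lemma zset_sub: "zset x \<subseteq> {0..<length x}" unfolding zset_def by auto

lemma onemax_le: "onemax x \<le> length x" unfolding onemax_def by simp

lemma opt_iff: "length x = n \<Longrightarrow> (x = replicate n True) = (onemax x = n)"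
proof -
  assume l: "length x = n"
  have "(x = replicate n True) = (zset x = {})"
    unfolding zset_def using l by (auto simp: list_eq_iff_nth_eq)
  also have "\<dots> = (card (zset x) = 0)" using zset_sub finite_subset by (metis card_eq_0_iff finite_atLeastLessThan)
  also have "\<dots> = (onemax x = n)" using card_zset[of x] onemax_le[of x] l by auto
  finally show ?thesis .
qed

lemma positions_ne: "M \<le> n \<Longrightarrow> positions n M \<noteq> {}"
proof -
  assume "M \<le> n"
  then have "[0..<M] \<in> positions n M" unfolding positions_def by auto
  then show ?thesis by auto
qed

lemma positions_fin: "finite (positions n M)"
  unfolding positions_DL by (rule finite_DL) simp



definition Vf :: "nat \<Rightarrow> nat \<Rightarrow> real" where
  "Vf n j = real n ^ 2 * harm j"

lemma harm_pred: "1 \<le> j \<Longrightarrow> harm (j - 1) = (harm j :: real) - 1 / real j"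
  by (cases j) (simp_all add: harm_Suc inverse_eq_divide)

lemma sum_minus_if:
  assumes "finite S"
  shows "(\<Sum>s\<in>S. (a - (if P s then b else 0))) = real (card S) * a - b * real (card {s \<in> S. P s})"
proof -
  have "(\<Sum>s\<in>S. (if P s then b else 0)) = real (card {s \<in> S. P s}) * b"
    unfolding sum.inter_filter[OF assms, symmetric] by simp
  then show ?thesis using assms by (simp add: sum_subtractf)
qed

lemma step_upper_sum:
  assumes gc: "good_constr constr" and lx: "length x = n" and M1: "1 \<le> M" and Mn: "M \<le> n"
    and nopt: "onemax x < n"
  shows "(\<Sum>ps\<in>DL {0..<n} M. real c + real (snd (stepres constr M x ps)) + Vf n (n - onemax (fst (stepres constr M x ps))))
       \<le> real (card (DL {0..<n} M)) * (real c + Vf n (n - onemax x))"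
proof -
  define P where "P = DL {0..<n} M"
  define j where "j = n - onemax x"
  define Z where "Z = zset x"
  have j1: "1 \<le> j" using nopt j_def by simp
  have cZ: "card Z = j" unfolding Z_def j_def using card_zset[of x] lx by simp
  have ZU: "Z \<subseteq> {0..<n}" unfolding Z_def using zset_sub[of x] lx by simp
  have finP: "finite P" unfolding P_def by (rule finite_DL) simp
  have ctx: "stepctx constr M x ps" if "ps \<in> P" for ps
    using gc that M1 lx unfolding P_def by (intro stepctx.intro) auto
  have tb: "real c + real (snd (stepres constr M x ps)) + Vf n (n - onemax (fst (stepres constr M x ps)))
       \<le> (real c + real n + Vf n j) - (if hd ps \<in> Z then real n ^ 2 / real j else 0)" if ps: "ps \<in> P" for ps
  proof -
    interpret stepctx constr M x ps by (rule ctx[OF ps])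
    let ?y = "fst (stepres constr M x ps)"
    have k: "real (snd (stepres constr M x ps)) \<le> real n" using k_bounds Mn by simp
    have yb: "onemax x \<le> onemax ?y" using res_bounds by simp
    have v: "Vf n (n - onemax ?y) \<le> Vf n j - (if hd ps \<in> Z then real n ^ 2 / real j else 0)"
    proof (cases "hd ps \<in> Z")
      case True
      then have "\<not> x ! hd ps" unfolding Z_def zset_def by simp
      then have "onemax ?y = onemax x + 1" by (rule res_hd_zero)
      then have "n - onemax ?y = j - 1" unfolding j_def by simp
      moreover have "real n ^ 2 * harm j = real n ^ 2 * harm (j - 1) + real n ^ 2 / real j"
      proof -
        have "harm j = harm (j - 1) + 1 / (real j :: real)" using harm_pred[OF j1] by simp
        then show ?thesis by (simp add: algebra_simps)
      qed
      ultimately show ?thesis using True unfolding Vf_def by simp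
    next
      case False
      have "n - onemax ?y \<le> j" unfolding j_def using yb by simp
      then have "harm (n - onemax ?y) \<le> (harm j :: real)" by (rule harm_mono)
      then show ?thesis using False unfolding Vf_def by (simp add: mult_left_mono)
    qed
    show ?thesis using k v by simp
  qed
  have "(\<Sum>ps\<in>P. real c + real (snd (stepres constr M x ps)) + Vf n (n - onemax (fst (stepres constr M x ps))))
      \<le> (\<Sum>ps\<in>P. (real c + real n + Vf n j) - (if hd ps \<in> Z then real n ^ 2 / real j else 0))"
    using tb by (intro sum_mono) auto
  also have "\<dots> = real (card P) * (real c + real n + Vf n j) - real n ^ 2 / real j * real (card {ps \<in> P. hd ps \<in> Z})"
    by (rule sum_minus_if[OF finP])
  also have "real (card {ps \<in> P. hd ps \<in> Z}) = real j / real n * real (card P)"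
  proof -
    obtain K where K: "M = Suc K" using M1 by (cases M) auto
    have "real (card {ps \<in> DL {0..<n} (Suc K). hd ps \<in> Z}) = real (card Z) / real (card {0..<n}) * real (card (DL {0..<n} (Suc K)))"
      by (rule hd_count) (use ZU M1 Mn in auto)
    then show ?thesis unfolding P_def K cZ by simp
  qed
  also have "real (card P) * (real c + real n + Vf n j) - real n ^ 2 / real j * (real j / real n * real (card P))
      = real (card P) * (real c + Vf n j)"
    using j1 Mn M1 by (simp add: field_simps power2_eq_square)
  finally show ?thesis unfolding P_def j_def .
qed

definition Wf :: "nat \<Rightarrow> nat \<Rightarrow> nat \<Rightarrow> real" where
  "Wf n M i = real M * real n / 8 * harm (min i (n div 8))"

lemma Wf_mono: "i \<le> i' \<Longrightarrow> Wf n M i \<le> Wf n M i'"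
  unfolding Wf_def by (intro mult_left_mono harm_mono) auto

lemma step_lower_sum:
  assumes gc: "good_constr constr" and lx: "length x = n" and M1: "1 \<le> M" and Mn: "M \<le> n"
    and nopt: "onemax x < n"
  shows "real (card (DL {0..<n} M)) * (real c + Wf n M (n - onemax x))
       \<le> (\<Sum>ps\<in>DL {0..<n} M. real c + real (snd (stepres constr M x ps)) + Wf n M (n - onemax (fst (stepres constr M x ps))))"
proof -
  define P where "P = DL {0..<n} M"
  define j where "j = n - onemax x"
  define Z where "Z = zset x"
  define \<Delta> where "\<Delta> = Wf n M j - Wf n M (j - 1)"
  define E where "E = (\<lambda>ps. hd ps \<in> Z \<or> reach Z 1 (tl ps))"
  have j1: "1 \<le> j" using nopt j_def by simp
  have cZ: "card Z = j" unfolding Z_def j_def using card_zset[of x] lx by simp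
  have ZU: "Z \<subseteq> {0..<n}" unfolding Z_def using zset_sub[of x] lx by simp
  have finP: "finite P" unfolding P_def by (rule finite_DL) simp
  have D0: "\<Delta> \<ge> 0" unfolding \<Delta>_def by (intro diff_ge_0_iff_ge[THEN iffD2] Wf_mono) simp
  have ctx: "stepctx constr M x ps" if "ps \<in> P" for ps
    using gc that M1 lx unfolding P_def by (intro stepctx.intro) auto
  have tb: "(real c + Wf n M j + real M) - (if E ps then real M + \<Delta> else 0)
      \<le> real c + real (snd (stepres constr M x ps)) + Wf n M (n - onemax (fst (stepres constr M x ps)))"
    if ps: "ps \<in> P" for ps
  proof -
    interpret stepctx constr M x ps by (rule ctx[OF ps])
    let ?y = "fst (stepres constr M x ps)"
    show ?thesis
    proof (cases "E ps")
      case True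
      have "onemax ?y \<le> onemax x + 1" using res_bounds by simp
      then have "j - 1 \<le> n - onemax ?y" unfolding j_def by simp
      then have "Wf n M (j - 1) \<le> Wf n M (n - onemax ?y)" by (rule Wf_mono)
      then show ?thesis using True unfolding \<Delta>_def by simp
    next
      case False
      then have "snd (stepres constr M x ps) = M \<and> ?y = x"
        using res_noE unfolding E_def Z_def zset_def by blast
      then show ?thesis using False unfolding j_def by simp
    qed
  qed
  have cardE: "(real M + \<Delta>) * real (card {ps \<in> P. E ps}) \<le> real M * real (card P)"
  proof (cases "j \<le> n div 8")
    case True
    have n8: "8 * j \<le> n" using True by simp
    have dval: "\<Delta> = real M * real n / 8 / real j"
    proof -
      have "min j (n div 8) = j" "min (j - 1) (n div 8) = j - 1" using True by auto
      moreover have "harm j = harm (j - 1) + 1 / (real j :: real)" using harm_pred[OF j1] by simp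
      ultimately show ?thesis unfolding \<Delta>_def Wf_def
        by (simp add: algebra_simps)
    qed
    obtain K where K: "M = Suc K" using M1 by (cases M) auto
    have "real (card {ps \<in> DL {0..<n} (Suc K). hd ps \<in> Z \<or> reach Z 1 (tl ps)})
        \<le> 4 * real (card Z) / real (card {0..<n}) * real (card (DL {0..<n} (Suc K)))"
      by (rule E_count) (use ZU n8 j1 cZ in auto)
    then have ce: "real (card {ps \<in> P. E ps}) \<le> 4 * real j / real n * real (card P)"
      unfolding P_def E_def K cZ by simp
    have "(real M + \<Delta>) * real (card {ps \<in> P. E ps}) \<le> (real M + \<Delta>) * (4 * real j / real n * real (card P))"
      using ce D0 by (intro mult_left_mono) auto
    also have "\<dots> = (4 * real M * real j / real n + real M / 2) * real (card P)"
      unfolding dval using j1 n8 by (simp add: field_simps)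
    also have "\<dots> \<le> real M * real (card P)"
    proof (intro mult_right_mono)
      have "4 * real M * real j / real n \<le> real M / 2"
      proof -
        have "8 * real j \<le> real n" using n8 by linarith
        then have "real M * (8 * real j) \<le> real M * real n" by (intro mult_left_mono) auto
        then show ?thesis using j1 n8 by (simp add: divide_simps)
      qed
      then show "4 * real M * real j / real n + real M / 2 \<le> real M" by simp
    qed simp
    finally show ?thesis .
  next
    case False
    have "min j (n div 8) = n div 8" "min (j - 1) (n div 8) = n div 8" using False by auto
    then have d0: "\<Delta> = 0" unfolding \<Delta>_def Wf_def by simp
    have "card {ps \<in> P. E ps} \<le> card P" using finP by (intro card_mono) auto
    then show ?thesis unfolding d0 by (simp add: mult_left_mono)
  qed
  have "real (card P) * (real c + Wf n M j) = real (card P) * (real c + Wf n M j + real M) - real M * real (card P)"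
    by (simp add: algebra_simps)
  also have "\<dots> \<le> real (card P) * (real c + Wf n M j + real M) - (real M + \<Delta>) * real (card {ps \<in> P. E ps})"
    using cardE by simp
  also have "\<dots> = (\<Sum>ps\<in>P. (real c + Wf n M j + real M) - (if E ps then real M + \<Delta> else 0))"
    by (rule sum_minus_if[OF finP, symmetric])
  also have "\<dots> \<le> (\<Sum>ps\<in>P. real c + real (snd (stepres constr M x ps)) + Wf n M (n - onemax (fst (stepres constr M x ps))))"
    using tb by (intro sum_mono) auto
  finally show ?thesis unfolding P_def j_def .
qed



abbreviation "optn n \<equiv> (\<lambda>x. x = replicate n True)"
abbreviation "run constr n M t \<equiv> ia_run constr onemax (optn n) n M t"

lemma lists_fin: "finite {x :: bool list. length x = n}"
proof -
  have "{x :: bool list. length x = n} = {xs. set xs \<subseteq> UNIV \<and> length xs = n}" by auto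
  then show ?thesis using finite_lists_length_eq[of "UNIV :: bool set" n] by simp
qed

lemma lists_ne: "{x :: bool list. length x = n} \<noteq> {}"
proof -
  have "replicate n True \<in> {x :: bool list. length x = n}" by simp
  then show ?thesis by (metis empty_iff)
qed

lemma set_ia_step:
  "M \<le> length x \<Longrightarrow> set_pmf (ia_step constr onemax M x) = stepres constr M x ` DL {0..<length x} M"
  unfolding ia_step_eq using positions_fin positions_ne by (simp add: positions_DL)

lemma run_inv:
  assumes gc: "good_constr constr" and M1: "1 \<le> M" and Mn: "M \<le> n"
  shows "s \<in> set_pmf (run constr n M t) \<Longrightarrow> length (fst s) = n \<and> (fst s \<noteq> replicate n True \<longrightarrow> Suc t \<le> snd s)"
proof (induction t arbitrary: s)
  case 0
  then show ?case using lists_fin lists_ne by auto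
next
  case (Suc t)
  from Suc.prems obtain s0 where s0: "s0 \<in> set_pmf (run constr n M t)"
    and s: "s \<in> set_pmf ((\<lambda>(x, c). if optn n x then return_pmf (x, c)
       else map_pmf (\<lambda>(y, k). (y, c + k)) (ia_step constr onemax M x)) s0)"
    by auto
  obtain x c where xc: "s0 = (x, c)" by (cases s0)
  have ih: "length x = n" "x \<noteq> replicate n True \<Longrightarrow> Suc t \<le> c" using Suc.IH[OF s0] xc by auto
  show ?case
  proof (cases "x = replicate n True")
    case True
    then show ?thesis using s xc by simp
  next
    case False
    then obtain ps where ps: "ps \<in> DL {0..<n} M" and seq: "s = (fst (stepres constr M x ps), c + snd (stepres constr M x ps))"
    proof -
      have "s \<in> set_pmf (map_pmf (\<lambda>(y, k). (y, c + k)) (ia_step constr onemax M x))"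
        using s xc False by simp
      also have "\<dots> = (\<lambda>(y, k). (y, c + k)) ` (stepres constr M x ` DL {0..<n} M)"
        using set_ia_step[of M x constr] ih(1) Mn by simp
      finally obtain ps where "ps \<in> DL {0..<n} M" "s = (\<lambda>(y, k). (y, c + k)) (stepres constr M x ps)"
        by blast
      then show ?thesis using that by (simp add: split_beta)
    qed
    interpret stepctx constr M x ps using gc ps M1 ih(1) by (intro stepctx.intro) auto
    show ?thesis using seq len_res k_bounds ih(1) ih(2)[OF False] by simp
  qed
qed

lemma nopt_lt: "length x = n \<Longrightarrow> x \<noteq> replicate n True \<Longrightarrow> onemax x < n"
  using opt_iff[of x n] onemax_le[of x] by auto

lemma Vf_nonneg: "0 \<le> Vf n j" unfolding Vf_def by (simp add: harm_nonneg)
lemma Wf_nonneg: "0 \<le> Wf n M j" unfolding Wf_def by (simp add: harm_nonneg)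

lemma step_int_upper:
  assumes gc: "good_constr constr" and M1: "1 \<le> M" and Mn: "M \<le> n" and lx: "length x = n"
    and nopt: "x \<noteq> replicate n True"
  shows "(\<integral>\<^sup>+s. ennreal (real (snd s) + Vf n (n - onemax (fst s))) \<partial>measure_pmf (map_pmf (\<lambda>(y, k). (y, c + k)) (ia_step constr onemax M x)))
      \<le> ennreal (real c + Vf n (n - onemax x))"
proof -
  define P where "P = DL {0..<n} M"
  have fin: "finite P" unfolding P_def by (rule finite_DL) simp
  have ne: "P \<noteq> {}" unfolding P_def using positions_ne[OF Mn] by (simp add: positions_DL)
  have cp: "real (card P) > 0" using fin ne by (simp add: card_gt_0_iff)
  have "(\<integral>\<^sup>+s. ennreal (real (snd s) + Vf n (n - onemax (fst s))) \<partial>measure_pmf (map_pmf (\<lambda>(y, k). (y, c + k)) (ia_step constr onemax M x)))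
      = (\<integral>\<^sup>+ps. ennreal (real c + real (snd (stepres constr M x ps)) + Vf n (n - onemax (fst (stepres constr M x ps)))) \<partial>measure_pmf (pmf_of_set P))"
    unfolding ia_step_eq lx positions_DL P_def by (simp add: split_beta add.assoc)
  also have "\<dots> = ennreal ((\<Sum>ps\<in>P. real c + real (snd (stepres constr M x ps)) + Vf n (n - onemax (fst (stepres constr M x ps)))) / real (card P))"
    using fin ne Vf_nonneg by (intro nn_int_pmf_of_set_real) (auto intro: add_nonneg_nonneg)
  also have "\<dots> \<le> ennreal (real c + Vf n (n - onemax x))"
  proof (intro ennreal_leI)
    have "(\<Sum>ps\<in>P. real c + real (snd (stepres constr M x ps)) + Vf n (n - onemax (fst (stepres constr M x ps))))
        \<le> real (card P) * (real c + Vf n (n - onemax x))"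
      unfolding P_def by (rule step_upper_sum[OF gc lx M1 Mn nopt_lt[OF lx nopt]])
    then show "(\<Sum>ps\<in>P. real c + real (snd (stepres constr M x ps)) + Vf n (n - onemax (fst (stepres constr M x ps)))) / real (card P)
        \<le> real c + Vf n (n - onemax x)" using cp by (simp add: divide_simps mult.commute)
  qed
  finally show ?thesis .
qed

lemma step_int_lower:
  assumes gc: "good_constr constr" and M1: "1 \<le> M" and Mn: "M \<le> n" and lx: "length x = n"
    and nopt: "x \<noteq> replicate n True"
  shows "ennreal (real c + Wf n M (n - onemax x)) \<le>
     (\<integral>\<^sup>+s. ennreal (real (snd s) + Wf n M (n - onemax (fst s))) \<partial>measure_pmf (map_pmf (\<lambda>(y, k). (y, c + k)) (ia_step constr onemax M x)))"
proof -
  define P where "P = DL {0..<n} M"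
  have fin: "finite P" unfolding P_def by (rule finite_DL) simp
  have ne: "P \<noteq> {}" unfolding P_def using positions_ne[OF Mn] by (simp add: positions_DL)
  have cp: "real (card P) > 0" using fin ne by (simp add: card_gt_0_iff)
  have "(\<integral>\<^sup>+s. ennreal (real (snd s) + Wf n M (n - onemax (fst s))) \<partial>measure_pmf (map_pmf (\<lambda>(y, k). (y, c + k)) (ia_step constr onemax M x)))
      = (\<integral>\<^sup>+ps. ennreal (real c + real (snd (stepres constr M x ps)) + Wf n M (n - onemax (fst (stepres constr M x ps)))) \<partial>measure_pmf (pmf_of_set P))"
    unfolding ia_step_eq lx positions_DL P_def by (simp add: split_beta add.assoc)
  also have "\<dots> = ennreal ((\<Sum>ps\<in>P. real c + real (snd (stepres constr M x ps)) + Wf n M (n - onemax (fst (stepres constr M x ps)))) / real (card P))"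
    using fin ne Wf_nonneg by (intro nn_int_pmf_of_set_real) (auto intro: add_nonneg_nonneg)
  finally have eq: "(\<integral>\<^sup>+s. ennreal (real (snd s) + Wf n M (n - onemax (fst s))) \<partial>measure_pmf (map_pmf (\<lambda>(y, k). (y, c + k)) (ia_step constr onemax M x)))
     = ennreal ((\<Sum>ps\<in>P. real c + real (snd (stepres constr M x ps)) + Wf n M (n - onemax (fst (stepres constr M x ps)))) / real (card P))" .
  have "real (card P) * (real c + Wf n M (n - onemax x))
      \<le> (\<Sum>ps\<in>P. real c + real (snd (stepres constr M x ps)) + Wf n M (n - onemax (fst (stepres constr M x ps))))"
    unfolding P_def by (rule step_lower_sum[OF gc lx M1 Mn nopt_lt[OF lx nopt]])
  then have "real c + Wf n M (n - onemax x)
      \<le> (\<Sum>ps\<in>P. real c + real (snd (stepres constr M x ps)) + Wf n M (n - onemax (fst (stepres constr M x ps)))) / real (card P)"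
    using cp by (simp add: divide_simps mult.commute)
  then show ?thesis unfolding eq by (intro ennreal_leI)
qed



lemma run_Suc: "run constr n M (Suc t) = bind_pmf (run constr n M t) (\<lambda>(x, c).
       if optn n x then return_pmf (x, c)
       else map_pmf (\<lambda>(y, k). (y, c + k)) (ia_step constr onemax M x))"
  by simp

lemma chain_upper:
  assumes gc: "good_constr constr" and M1: "1 \<le> M" and Mn: "M \<le> n"
  shows "(\<integral>\<^sup>+s. ennreal (real (snd s) + Vf n (n - onemax (fst s))) \<partial>measure_pmf (run constr n M (Suc t)))
      \<le> (\<integral>\<^sup>+s. ennreal (real (snd s) + Vf n (n - onemax (fst s))) \<partial>measure_pmf (run constr n M t))"
  unfolding run_Suc nn_integral_bind_pmf
proof (intro nn_integral_mono_AE AE_pmfI)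
  fix s0 assume s0: "s0 \<in> set_pmf (run constr n M t)"
  obtain x c where xc: "s0 = (x, c)" by (cases s0)
  have lx: "length x = n" using run_inv[OF gc M1 Mn s0] xc by simp
  show "(\<integral>\<^sup>+s. ennreal (real (snd s) + Vf n (n - onemax (fst s))) \<partial>measure_pmf ((\<lambda>(x, c).
       if optn n x then return_pmf (x, c)
       else map_pmf (\<lambda>(y, k). (y, c + k)) (ia_step constr onemax M x)) s0))
      \<le> ennreal (real (snd s0) + Vf n (n - onemax (fst s0)))"
  proof (cases "x = replicate n True")
    case True
    then show ?thesis using xc by simp
  next
    case False
    then show ?thesis using xc step_int_upper[OF gc M1 Mn lx False, of c] by simp
  qed
qed

lemma chain_lower:
  assumes gc: "good_constr constr" and M1: "1 \<le> M" and Mn: "M \<le> n"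
  shows "(\<integral>\<^sup>+s. ennreal (real (snd s) + Wf n M (n - onemax (fst s))) \<partial>measure_pmf (run constr n M t))
      \<le> (\<integral>\<^sup>+s. ennreal (real (snd s) + Wf n M (n - onemax (fst s))) \<partial>measure_pmf (run constr n M (Suc t)))"
  unfolding run_Suc nn_integral_bind_pmf
proof (intro nn_integral_mono_AE AE_pmfI)
  fix s0 assume s0: "s0 \<in> set_pmf (run constr n M t)"
  obtain x c where xc: "s0 = (x, c)" by (cases s0)
  have lx: "length x = n" using run_inv[OF gc M1 Mn s0] xc by simp
  show "ennreal (real (snd s0) + Wf n M (n - onemax (fst s0))) \<le>
      (\<integral>\<^sup>+s. ennreal (real (snd s) + Wf n M (n - onemax (fst s))) \<partial>measure_pmf ((\<lambda>(x, c).
       if optn n x then return_pmf (x, c)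
       else map_pmf (\<lambda>(y, k). (y, c + k)) (ia_step constr onemax M x)) s0))"
  proof (cases "x = replicate n True")
    case True
    then show ?thesis using xc by simp
  next
    case False
    then show ?thesis using xc step_int_lower[OF gc M1 Mn lx False, of c] by simp
  qed
qed

lemma chain_upper_all:
  assumes gc: "good_constr constr" and M1: "1 \<le> M" and Mn: "M \<le> n"
  shows "(\<integral>\<^sup>+s. ennreal (real (snd s) + Vf n (n - onemax (fst s))) \<partial>measure_pmf (run constr n M t))
      \<le> (\<integral>\<^sup>+s. ennreal (real (snd s) + Vf n (n - onemax (fst s))) \<partial>measure_pmf (run constr n M 0))"
proof (induction t)
  case 0 then show ?case by simp
next
  case (Suc t) then show ?case using chain_upper[OF gc M1 Mn, of t] by (rule_tac order_trans) auto
qed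

lemma chain_lower_all:
  assumes gc: "good_constr constr" and M1: "1 \<le> M" and Mn: "M \<le> n"
  shows "(\<integral>\<^sup>+s. ennreal (real (snd s) + Wf n M (n - onemax (fst s))) \<partial>measure_pmf (run constr n M 0))
      \<le> (\<integral>\<^sup>+s. ennreal (real (snd s) + Wf n M (n - onemax (fst s))) \<partial>measure_pmf (run constr n M t))"
proof (induction t)
  case 0 then show ?case by simp
next
  case (Suc t) then show ?case using chain_lower[OF gc M1 Mn, of t] by (rule_tac order_trans) auto
qed



lemma init_count:
  assumes "2 * L \<le> n"
  shows "card {x :: bool list. length x = n} \<le> 2 * card {x :: bool list. length x = n \<and> L \<le> n - onemax x}"
proof -
  define A where "A = {x :: bool list. length x = n \<and> L \<le> n - onemax x}"
  have om: "onemax (map Not x) = length x - onemax x" for x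
  proof -
    have "length (filter id (map Not x)) = length (filter Not x)" by (induction x) auto
    moreover have "length (filter id x) + length (filter (\<lambda>b. \<not> id b) x) = length x"
      by (rule sum_length_filter_compl)
    ultimately show ?thesis unfolding onemax_def by simp
  qed
  have "{x :: bool list. length x = n} \<subseteq> A \<union> map Not ` A"
  proof
    fix x :: "bool list" assume "x \<in> {x. length x = n}"
    then have lx: "length x = n" by simp
    show "x \<in> A \<union> map Not ` A"
    proof (cases "L \<le> n - onemax x")
      case True then show ?thesis using lx unfolding A_def by simp
    next
      case False
      have "map Not x \<in> A" unfolding A_def using lx False om[of x] onemax_le[of x] assms by auto
      moreover have "x = map Not (map Not x)" by (simp add: comp_def)
      ultimately show ?thesis by blast
    qed
  qed
  moreover have "finite A" unfolding A_def using lists_fin[of n] by (rule finite_subset[rotated]) auto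
  ultimately have "card {x :: bool list. length x = n} \<le> card (A \<union> map Not ` A)"
    by (intro card_mono) auto
  also have "\<dots> \<le> card A + card (map Not ` A)" by (rule card_Un_le)
  also have "\<dots> \<le> card A + card A" using card_image_le[OF \<open>finite A\<close>] by simp
  finally show ?thesis unfolding A_def by simp
qed

lemma upper_runtime:
  assumes gc: "good_constr constr" and M1: "1 \<le> M" and Mn: "M \<le> n"
  shows "expected_runtime constr onemax (optn n) n M \<le> ennreal (1 + Vf n n)"
  unfolding expected_runtime_def
proof (rule SUP_least)
  fix t
  have "(\<integral>\<^sup>+s. ennreal (real (snd s)) \<partial>measure_pmf (run constr n M t))
      \<le> (\<integral>\<^sup>+s. ennreal (real (snd s) + Vf n (n - onemax (fst s))) \<partial>measure_pmf (run constr n M t))"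
    using Vf_nonneg by (intro nn_integral_mono ennreal_leI) auto
  also have "\<dots> \<le> (\<integral>\<^sup>+s. ennreal (real (snd s) + Vf n (n - onemax (fst s))) \<partial>measure_pmf (run constr n M 0))"
    by (rule chain_upper_all[OF gc M1 Mn])
  also have "\<dots> = (\<integral>\<^sup>+x. ennreal (1 + Vf n (n - onemax x)) \<partial>measure_pmf (pmf_of_set {x :: bool list. length x = n}))"
    by simp
  also have "\<dots> \<le> (\<integral>\<^sup>+x. ennreal (1 + Vf n n) \<partial>measure_pmf (pmf_of_set {x :: bool list. length x = n}))"
    unfolding Vf_def by (intro nn_integral_mono ennreal_leI) (auto intro!: mult_left_mono harm_mono)
  also have "\<dots> = ennreal (1 + Vf n n)"
    by (simp add: measure_pmf.emeasure_space_1)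
  finally show "(\<integral>\<^sup>+s. ennreal (real (snd s)) \<partial>measure_pmf (run constr n M t)) \<le> ennreal (1 + Vf n n)" .
qed

lemma lower_runtime:
  assumes gc: "good_constr constr" and M1: "1 \<le> M" and Mn: "M \<le> n"
  shows "ennreal (Wf n M n / 4) \<le> expected_runtime constr onemax (optn n) n M"
proof -
  define B where "B = Wf n M n"
  define L where "L = n div 8"
  define S where "S = {x :: bool list. length x = n}"
  have B0: "B \<ge> 0" unfolding B_def by (rule Wf_nonneg)
  have WB: "Wf n M i \<le> B" for i unfolding B_def Wf_def by (intro mult_left_mono harm_mono) auto
  have WL: "Wf n M i = B" if "L \<le> i" for i
  proof -
    have "min n (n div 8) = n div 8" "min i (n div 8) = n div 8" using that unfolding L_def by auto
    then show ?thesis unfolding B_def Wf_def by simp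
  qed
  define t where "t = nat \<lceil>B\<rceil>"
  have tB: "B \<le> real (Suc t)" unfolding t_def by linarith
  have finS: "finite S" "S \<noteq> {}" unfolding S_def using lists_fin lists_ne by auto
  have cS: "real (card S) > 0" using finS by (simp add: card_gt_0_iff)
  have "(\<Sum>x\<in>S. (if L \<le> n - onemax x then B else 0)) = B * real (card {x \<in> S. L \<le> n - onemax x})"
    unfolding sum.inter_filter[OF finS(1), symmetric] by simp
  moreover have "real (card S) \<le> 2 * real (card {x \<in> S. L \<le> n - onemax x})"
  proof -
    have "card S \<le> 2 * card {x \<in> S. L \<le> n - onemax x}"
      using init_count[of L n] unfolding S_def L_def by (simp add: Collect_conj_eq[symmetric])
    then show ?thesis by linarith
  qed
  ultimately have "B * real (card S) / 2 \<le> (\<Sum>x\<in>S. (if L \<le> n - onemax x then B else 0))"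
  proof -
    assume e: "(\<Sum>x\<in>S. (if L \<le> n - onemax x then B else 0)) = B * real (card {x \<in> S. L \<le> n - onemax x})"
      and c: "real (card S) \<le> 2 * real (card {x \<in> S. L \<le> n - onemax x})"
    have "B * real (card S) \<le> B * (2 * real (card {x \<in> S. L \<le> n - onemax x}))"
      using c B0 by (rule mult_left_mono)
    then show ?thesis unfolding e by simp
  qed
  also have "\<dots> \<le> (\<Sum>x\<in>S. 1 + Wf n M (n - onemax x))"
    using WL Wf_nonneg by (intro sum_mono) (auto intro: add_nonneg_nonneg)
  finally have sumb: "B / 2 \<le> (\<Sum>x\<in>S. 1 + Wf n M (n - onemax x)) / real (card S)"
    using cS by (simp add: divide_simps mult.commute)
  have "ennreal (B / 2) \<le> (\<integral>\<^sup>+x. ennreal (1 + Wf n M (n - onemax x)) \<partial>measure_pmf (pmf_of_set S))"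
    using sumb finS Wf_nonneg by (subst nn_int_pmf_of_set_real) (auto intro: add_nonneg_nonneg ennreal_leI)
  also have "\<dots> = (\<integral>\<^sup>+s. ennreal (real (snd s) + Wf n M (n - onemax (fst s))) \<partial>measure_pmf (run constr n M 0))"
    unfolding S_def by simp
  also have "\<dots> \<le> (\<integral>\<^sup>+s. ennreal (real (snd s) + Wf n M (n - onemax (fst s))) \<partial>measure_pmf (run constr n M t))"
    by (rule chain_lower_all[OF gc M1 Mn])
  also have "\<dots> \<le> (\<integral>\<^sup>+s. ennreal 2 * ennreal (real (snd s)) \<partial>measure_pmf (run constr n M t))"
  proof (intro nn_integral_mono_AE AE_pmfI)
    fix s assume s: "s \<in> set_pmf (run constr n M t)"
    have "Wf n M (n - onemax (fst s)) \<le> real (snd s)"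
    proof (cases "fst s = replicate n True")
      case True
      then have "n - onemax (fst s) = 0" by (simp add: onemax_def)
      then show ?thesis unfolding Wf_def by (simp add: harm_def)
    next
      case False
      then have "Suc t \<le> snd s" using run_inv[OF gc M1 Mn s] by simp
      then show ?thesis using WB[of "n - onemax (fst s)"] tB by linarith
    qed
    then show "ennreal (real (snd s) + Wf n M (n - onemax (fst s))) \<le> ennreal 2 * ennreal (real (snd s))"
      by (subst ennreal_mult[symmetric]) (auto intro: ennreal_leI)
  qed
  also have "\<dots> = ennreal 2 * (\<integral>\<^sup>+s. ennreal (real (snd s)) \<partial>measure_pmf (run constr n M t))"
    by (rule nn_integral_cmult) simp
  also have "\<dots> \<le> ennreal 2 * expected_runtime constr onemax (optn n) n M"
    unfolding expected_runtime_def by (intro mult_left_mono SUP_upper) auto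
  finally have h0: "ennreal (B / 2) \<le> ennreal 2 * expected_runtime constr onemax (optn n) n M" .
  have "ennreal (B / 2) = ennreal 2 * ennreal (B / 4)" using B0 by (subst ennreal_mult[symmetric]) auto
  then have h: "ennreal 2 * ennreal (B / 4) \<le> ennreal 2 * expected_runtime constr onemax (optn n) n M"
    using h0 by simp
  show ?thesis using h unfolding B_def by (subst (asm) ennreal_mult_le_mult_iff) auto
qed



lemma harm_le_ln: "n \<ge> 1 \<Longrightarrow> harm n \<le> 1 + ln (real n)"
  using euler_mascheroni_sequence_decreasing[of 1 n] by (simp add: harm_def)

lemma final_bounds:
  fixes c :: real
  assumes gc: "good_constr constr" and c0: "0 < c" and c1: "c \<le> 1" and n64: "n \<ge> 64"
    and Mc: "real M = c * real n"
  shows "ennreal (c / 64 * (real n)\<^sup>2 * ln (real n)) \<le> expected_runtime constr onemax (optn n) n M \<and>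
         expected_runtime constr onemax (optn n) n M \<le> ennreal (3 * (real n)\<^sup>2 * ln (real n))"
proof -
  have M1: "1 \<le> M"
  proof -
    have "real M > 0" using Mc c0 n64 by simp
    then show ?thesis by simp
  qed
  have Mn: "M \<le> n"
  proof -
    have "real M \<le> real n" using Mc c1 n64 by (simp add: mult_left_le_one_le)
    then show ?thesis by simp
  qed
  have ln64: "ln (real n) \<ge> ln 64" using n64 by simp
  have ln64b: "ln (64::real) = 2 * ln 8"
  proof -
    have "ln (64::real) = ln (8 * 8)" by simp
    also have "\<dots> = ln 8 + ln 8" by (subst ln_mult) auto
    finally show ?thesis by simp
  qed
  have lnge1: "ln (real n) \<ge> 1"
  proof -
    have "exp 1 \<le> (3::real)" by (rule exp_le)
    then have "exp 1 \<le> real n" using n64 by linarith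
    then have "ln (exp 1) \<le> ln (real n)" using n64 by (subst ln_le_cancel_iff) auto
    then show ?thesis by simp
  qed
  have up: "expected_runtime constr onemax (optn n) n M \<le> ennreal (3 * (real n)\<^sup>2 * ln (real n))"
  proof -
    have "1 + Vf n n \<le> 3 * (real n)\<^sup>2 * ln (real n)"
    proof -
      have "harm n \<le> 1 + ln (real n)" using n64 by (intro harm_le_ln) simp
      then have "Vf n n \<le> (real n)\<^sup>2 * (1 + ln (real n))" unfolding Vf_def by (intro mult_left_mono) auto
      moreover have "1 \<le> (real n)\<^sup>2 * ln (real n)"
      proof -
        have n1: "(1::real) \<le> real n" using n64 by simp
        then have "1 * 1 \<le> real n * real n" by (intro mult_mono) auto
        then have "1 \<le> (real n)\<^sup>2" by (simp add: power2_eq_square)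
        also have "\<dots> \<le> (real n)\<^sup>2 * ln (real n)" using lnge1 by (simp add: mult_le_cancel_left1)
        finally show ?thesis .
      qed
      moreover have "(real n)\<^sup>2 \<le> (real n)\<^sup>2 * ln (real n)" using lnge1 by (simp add: mult_le_cancel_left1)
      ultimately show ?thesis by (simp add: algebra_simps)
    qed
    then show ?thesis using upper_runtime[OF gc M1 Mn] by (meson ennreal_leI order_trans)
  qed
  have lo: "ennreal (c / 64 * (real n)\<^sup>2 * ln (real n)) \<le> expected_runtime constr onemax (optn n) n M"
  proof -
    have "c / 64 * (real n)\<^sup>2 * ln (real n) \<le> Wf n M n / 4"
    proof -
      define L where "L = n div 8"
      have mn: "min n (n div 8) = L" unfolding L_def by simp
      have W: "Wf n M n / 4 = c * (real n)\<^sup>2 / 32 * harm L" unfolding Wf_def mn Mc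
        by (simp add: power2_eq_square)
      have "real n / 8 \<le> real L + 1" unfolding L_def by linarith
      then have "ln (real n / 8) \<le> ln (real L + 1)" using n64 by (subst ln_le_cancel_iff) auto
      also have "\<dots> \<le> harm L" by (rule ln_le_harm)
      finally have h1: "ln (real n / 8) \<le> harm L" .
      have "ln (real n / 8) = ln (real n) - ln 8" using n64 by (simp add: ln_div)
      then have h2: "ln (real n) / 2 \<le> harm L" using h1 ln64 ln64b by linarith
      have "c / 64 * (real n)\<^sup>2 * ln (real n) = c * (real n)\<^sup>2 / 32 * (ln (real n) / 2)" by simp
      also have "\<dots> \<le> c * (real n)\<^sup>2 / 32 * harm L" using h2 c0 by (intro mult_left_mono) auto
      finally show ?thesis unfolding W .
    qed
    then show ?thesis using lower_runtime[OF gc M1 Mn] by (meson ennreal_leI order_trans)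
  qed
  show ?thesis using up lo by simp
qed

theorem theorem3:
  fixes c :: real
  assumes "0 < c" and "c \<le> 1"
  shows "\<exists>C1 C2 N. 0 < C1 \<and> 0 < C2 \<and>
           (\<forall>n M. n \<ge> N \<longrightarrow> real M = c * real n \<longrightarrow>
              ennreal (C1 * (real n)\<^sup>2 * ln (real n)) \<le> ert_IA_gt_onemax n M \<and>
              ert_IA_gt_onemax n M \<le> ennreal (C2 * (real n)\<^sup>2 * ln (real n)) \<and>
              ennreal (C1 * (real n)\<^sup>2 * ln (real n)) \<le> ert_IA_ge_onemax n M \<and>
              ert_IA_ge_onemax n M \<le> ennreal (C2 * (real n)\<^sup>2 * ln (real n)))"
proof (intro exI conjI allI impI)
  show "0 < c / 64" using assms by simp
  show "0 < (3::real)" by simp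
  fix n M :: nat assume n: "64 \<le> n" and M: "real M = c * real n"
  have g: "ennreal (c / 64 * (real n)\<^sup>2 * ln (real n)) \<le> ert_IA_gt_onemax n M \<and>
         ert_IA_gt_onemax n M \<le> ennreal (3 * (real n)\<^sup>2 * ln (real n))"
    unfolding ert_IA_gt_onemax_def using final_bounds[OF good_gt assms n M] .
  have e: "ennreal (c / 64 * (real n)\<^sup>2 * ln (real n)) \<le> ert_IA_ge_onemax n M \<and>
         ert_IA_ge_onemax n M \<le> ennreal (3 * (real n)\<^sup>2 * ln (real n))"
    unfolding ert_IA_ge_onemax_def using final_bounds[OF good_ge assms n M] .
  show "ennreal (c / 64 * (real n)\<^sup>2 * ln (real n)) \<le> ert_IA_gt_onemax n M" using g by simp
  show "ert_IA_gt_onemax n M \<le> ennreal (3 * (real n)\<^sup>2 * ln (real n))" using g by simp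
  show "ennreal (c / 64 * (real n)\<^sup>2 * ln (real n)) \<le> ert_IA_ge_onemax n M" using e by simp
  show "ert_IA_ge_onemax n M \<le> ennreal (3 * (real n)\<^sup>2 * ln (real n))" using e by simp
qed


end
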